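(* Let $\Phi_\beta$ ($\beta\ge0$) be as in Assumption F2 and let $\Pi_\Phi=\{i: s_i\ne0\}$. Let $0\le\beta_1<\beta_0$, let $y$ be any minimizer of $\Phi_{\beta_1}$ and $z$ any minimizer of $\Phi_{\beta_0}$ over $\{0,1\}^n$. Then $H(y)\cap\Pi_\Phi\supseteq H(z)\cap\Pi_\Phi$.
   Context: Assumption F2: for $\beta\ge0$, $\Phi_\beta(x)=-\sum_{1\le i<j\le n}a_{i,j}x_ix_j+\beta\sum_{i=1}^n s_ix_i$ on $x\in\{0,1\}^n$, where all $a_{i,j}\ge0$ and all $s_i\ge0$ are rationals. $H(x)=\{i:x_i=1\}$. *)

theory Defs
  imports Main Complex_Main
begin

definition binvecs :: "nat \<Rightarrow> (nat \<Rightarrow> real) set" where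
  "binvecs n = {x. (\<forall>i\<in>{1..n}. x i = 0 \<or> x i = 1) \<and> (\<forall>i. i \<notin> {1..n} \<longrightarrow> x i = 0)}"

definition Phi :: "nat \<Rightarrow> (nat \<Rightarrow> nat \<Rightarrow> real) \<Rightarrow> (nat \<Rightarrow> real) \<Rightarrow> real \<Rightarrow> (nat \<Rightarrow> real) \<Rightarrow> real" where
  "Phi n a s \<beta> x = - (\<Sum>j\<in>{1..n}. \<Sum>i\<in>{1..<j}. a i j * x i * x j) + \<beta> * (\<Sum>i\<in>{1..n}. s i * x i)"

definition is_minimizer :: "nat \<Rightarrow> (nat \<Rightarrow> nat \<Rightarrow> real) \<Rightarrow> (nat \<Rightarrow> real) \<Rightarrow> real \<Rightarrow> (nat \<Rightarrow> real) \<Rightarrow> bool" where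
  "is_minimizer n a s \<beta> y \<longleftrightarrow> y \<in> binvecs n \<and> (\<forall>x\<in>binvecs n. Phi n a s \<beta> y \<le> Phi n a s \<beta> x)"

definition Hset :: "nat \<Rightarrow> (nat \<Rightarrow> real) \<Rightarrow> nat set" where
  "Hset n x = {i\<in>{1..n}. x i = 1}"

definition PiPhi :: "nat \<Rightarrow> (nat \<Rightarrow> real) \<Rightarrow> nat set" where
  "PiPhi n s = {i\<in>{1..n}. s i \<noteq> 0}"

end

theory Submission
  imports Defs
begin

lemma bin_cases: "(v::real) = 0 \<or> v = 1 \<Longrightarrow> w = 0 \<or> w = 1 \<Longrightarrow> p = 0 \<or> p = 1 \<Longrightarrow> q = 0 \<or> q = 1 \<Longrightarrow>
  max v w * max p q + min v w * min p q \<ge> v * p + w * q"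
  by (elim disjE) simp_all

theorem mainTheorem13:
  fixes n :: nat and a :: "nat \<Rightarrow> nat \<Rightarrow> real" and s :: "nat \<Rightarrow> real"
    and \<beta>0 \<beta>1 :: real and y z :: "nat \<Rightarrow> real"
  assumes a_rat: "\<And>i j. 1 \<le> i \<Longrightarrow> i < j \<Longrightarrow> j \<le> n \<Longrightarrow> a i j \<in> \<rat> \<and> a i j \<ge> 0"
    and s_rat: "\<And>i. 1 \<le> i \<Longrightarrow> i \<le> n \<Longrightarrow> s i \<in> \<rat> \<and> s i \<ge> 0"
    and b1: "0 \<le> \<beta>1" and b10: "\<beta>1 < \<beta>0"
    and y: "is_minimizer n a s \<beta>1 y"
    and z: "is_minimizer n a s \<beta>0 z"
  shows "Hset n z \<inter> PiPhi n s \<subseteq> Hset n y \<inter> PiPhi n s"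
proof -
  define u where "u = (\<lambda>i. max (y i) (z i))"
  define w where "w = (\<lambda>i. min (y i) (z i))"
  define F where "F = (\<lambda>x::nat\<Rightarrow>real. \<Sum>j\<in>{1..n}. \<Sum>i\<in>{1..<j}. a i j * x i * x j)"
  define L where "L = (\<lambda>x::nat\<Rightarrow>real. \<Sum>i\<in>{1..n}. s i * x i)"
  have PF: "\<And>b x. Phi n a s b x = - F x + b * L x" unfolding Phi_def F_def L_def by simp
  have yb: "y \<in> binvecs n" and zb: "z \<in> binvecs n" using y z by (auto simp: is_minimizer_def)
  have ybin: "\<And>i. y i = 0 \<or> y i = 1"
  proof -
    fix i show "y i = 0 \<or> y i = 1" using yb unfolding binvecs_def by (cases "i \<in> {1..n}") simp_all
  qed
  have zbin: "\<And>i. z i = 0 \<or> z i = 1"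
  proof -
    fix i show "z i = 0 \<or> z i = 1" using zb unfolding binvecs_def by (cases "i \<in> {1..n}") simp_all
  qed
  have ub: "u \<in> binvecs n" using ybin zbin yb zb unfolding binvecs_def u_def by (auto simp: max_def)
  have wb: "w \<in> binvecs n" using ybin zbin yb zb unfolding binvecs_def w_def by (auto simp: min_def)
  have 1: "F y + F z \<le> F u + F w"
  proof -
    have "F y + F z = (\<Sum>j\<in>{1..n}. \<Sum>i\<in>{1..<j}. a i j * (y i * y j + z i * z j))"
      unfolding F_def by (simp add: sum.distrib[symmetric] algebra_simps)
    also have "\<dots> \<le> (\<Sum>j\<in>{1..n}. \<Sum>i\<in>{1..<j}. a i j * (u i * u j + w i * w j))"
    proof (rule sum_mono, rule sum_mono)
      fix j i assume "j \<in> {1..n}" "i \<in> {1..<j}"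
      then have "a i j \<ge> 0" using a_rat by auto
      moreover have "y i * y j + z i * z j \<le> u i * u j + w i * w j"
        unfolding u_def w_def using bin_cases[OF ybin zbin ybin zbin] by blast
      ultimately show "a i j * (y i * y j + z i * z j) \<le> a i j * (u i * u j + w i * w j)"
        by (rule mult_left_mono[rotated])
    qed
    also have "\<dots> = F u + F w"
      unfolding F_def by (simp add: sum.distrib[symmetric] algebra_simps)
    finally show ?thesis .
  qed
  have 2: "L u + L w = L y + L z"
  proof -
    have "L u + L w = (\<Sum>i\<in>{1..n}. s i * (u i + w i))" unfolding L_def by (simp add: sum.distrib[symmetric] algebra_simps)
    also have "\<dots> = (\<Sum>i\<in>{1..n}. s i * (y i + z i))" unfolding u_def w_def
      by (rule sum.cong) (auto simp: max_def min_def)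
    also have "\<dots> = L y + L z" unfolding L_def by (simp add: sum.distrib[symmetric] algebra_simps)
    finally show ?thesis .
  qed
  have 3: "- F y + \<beta>1 * L y \<le> - F u + \<beta>1 * L u" using y ub unfolding is_minimizer_def PF by blast
  have 4: "- F z + \<beta>0 * L z \<le> - F w + \<beta>0 * L w" using z wb unfolding is_minimizer_def PF by blast
  define D where "D = L z - L w"
  have "(\<beta>0 - \<beta>1) * D \<le> 0"
  proof -
    have e: "L u - L y = D" using 2 unfolding D_def by linarith
    have "(\<beta>0 - \<beta>1) * D = \<beta>0 * (L z - L w) - \<beta>1 * (L u - L y)" unfolding e D_def by (simp add: algebra_simps)
    also have "\<dots> \<le> 0" using 1 3 4 unfolding right_diff_distrib by linarith
    finally show ?thesis .
  qed
  hence D0: "D \<le> 0" using b10 by (simp add: mult_le_0_iff)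
  have Dsum: "D = (\<Sum>i\<in>{1..n}. s i * (z i - w i))" unfolding D_def L_def by (simp add: sum_subtractf[symmetric] algebra_simps)
  have nn: "\<And>i. i \<in> {1..n} \<Longrightarrow> 0 \<le> s i * (z i - w i)"
    using s_rat unfolding w_def by (auto intro!: mult_nonneg_nonneg)
  have "0 \<le> D" unfolding Dsum using nn by (rule sum_nonneg)
  hence "(\<Sum>i\<in>{1..n}. s i * (z i - w i)) = 0" using D0 Dsum by linarith
  hence all0: "\<forall>i\<in>{1..n}. s i * (z i - w i) = 0"
    using sum_nonneg_eq_0_iff[of "{1..n}" "\<lambda>i. s i * (z i - w i)"] nn by blast
  show ?thesis
  proof
    fix i assume "i \<in> Hset n z \<inter> PiPhi n s"
    hence i: "i \<in> {1..n}" "z i = 1" "s i \<noteq> 0" unfolding Hset_def PiPhi_def by auto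
    hence "z i - w i = 0" using all0 by (metis mult_eq_0_iff)
    hence "min (y i) 1 = 1" using i(2) unfolding w_def by simp
    hence "y i = 1" using ybin[of i] by auto
    thus "i \<in> Hset n y \<inter> PiPhi n s" using i unfolding Hset_def PiPhi_def by auto
  qed
qed

end
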